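(* Let $X_1,\dots,X_n$ be i.i.d. with probability mass function $h_Q$ for some Borel probability measure $Q$ on $[0,\theta_*]$, and let $\hat Q$ be the nonparametric MLE. For every $\epsilon\in(0,1)$ there is a constant $C=C(\epsilon,\theta_* )>0$ (depending also on the fixed model $w$) such that for every $\delta\in(0,1)$, every $n\ge1$, and every real sequence $(b_x)_{x\ge0}$, $$\Big|\sum_{x=0}^\infty b_x\big(h^{\rm obs}_Q(x)-h_{\hat Q}(x)\big)\Big|\le C\max_{x\ge0}|b_x|\sqrt{\frac{1}{n^{1-\epsilon}\delta^{1+\epsilon}}}$$ holds with probability at least $1-\delta$ (simultaneously for all such sequences).
   Context: Discrete exponential family model: fix $\theta_*>0$ and $w(x)>0$, $x=0,1,2,\dots$, such that $\sum_{x\ge0}w(x)\theta^x$ has radius of convergence $\theta_r\in(0,\infty]$ with $\theta_*<\theta_r$; $g(\theta)=\big(\sum_{x\ge 0}w(x)\theta^x\big)^{-1}$, $f(x\mid\theta)=g(\theta)w(x)\theta^x$, $x\in\{0,1,\dots\}$, $\theta\in[0,\theta_*]$. $h_Q(x)=\int f(x\mid\theta)\,dQ(\theta)$. The MLE is $\hat Q\in\arg\max_{Q}\sum_{i=1}^n\log h_Q(X_i)$ over Borel probability measures on $[0,\theta_*]$. The empirical pmf is $h^{\rm obs}_Q(x)=n^{-1}\sum_{i=1}^n\mathbf 1(X_i=x)$. *)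

theory Defs
  imports "HOL-Analysis.Analysis" "HOL-Probability.Probability"
begin

definition gnorm :: "(nat \<Rightarrow> real) \<Rightarrow> real \<Rightarrow> real" where
  "gnorm w \<theta> = 1 / (\<Sum>x. w x * \<theta> ^ x)"

definition fdens :: "(nat \<Rightarrow> real) \<Rightarrow> nat \<Rightarrow> real \<Rightarrow> real" where
  "fdens w x \<theta> = gnorm w \<theta> * w x * \<theta> ^ x"

definition mixing_measures :: "real \<Rightarrow> real measure set" where
  "mixing_measures \<theta>s = {Q. prob_space Q \<and> sets Q = sets (restrict_space borel {0..\<theta>s})}"

definition hmix :: "(nat \<Rightarrow> real) \<Rightarrow> real measure \<Rightarrow> nat \<Rightarrow> real" where
  "hmix w Q x = (\<integral>\<theta>. fdens w x \<theta> \<partial>Q)"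

definition hmix_pmf :: "(nat \<Rightarrow> real) \<Rightarrow> real measure \<Rightarrow> nat pmf" where
  "hmix_pmf w Q = embed_pmf (hmix w Q)"

definition hobs :: "nat \<Rightarrow> (nat \<Rightarrow> nat) \<Rightarrow> nat \<Rightarrow> real" where
  "hobs n X x = real (card {i. i < n \<and> X i = x}) / real n"

text \<open>Nonparametric MLE: maximizer of sum_i log h_Q(X_i) over mixing measures,
  with the convention log 0 = -infinity (so a maximizer has positive likelihood at
  every observation, and only candidates with positive likelihood compete).\<close>
definition is_npmle :: "(nat \<Rightarrow> real) \<Rightarrow> real \<Rightarrow> nat \<Rightarrow> (nat \<Rightarrow> nat) \<Rightarrow> real measure \<Rightarrow> bool" where
  "is_npmle w \<theta>s n X Qh \<longleftrightarrow>
     Qh \<in> mixing_measures \<theta>s \<and> (\<forall>i<n. hmix w Qh (X i) > 0) \<and>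
     (\<forall>Q \<in> mixing_measures \<theta>s. (\<forall>i<n. hmix w Q (X i) > 0) \<longrightarrow>
        (\<Sum>i<n. ln (hmix w Q (X i))) \<le> (\<Sum>i<n. ln (hmix w Qh (X i))))"

end

theory Submission
  imports Defs
begin


locale model =
  fixes w :: "nat \<Rightarrow> real" and \<theta>s :: real
  assumes \<theta>s_pos: "\<theta>s > 0"
    and w_pos: "\<And>x. w x > 0"
    and radius: "ereal \<theta>s < conv_radius w"
begin

lemma summ: assumes "\<theta> \<in> {0..\<theta>s}" shows "summable (\<lambda>x. w x * \<theta> ^ x)"
proof (rule summable_in_conv_radius)
  have "ereal (norm \<theta>) \<le> ereal \<theta>s" using assms by auto
  then show "ereal (norm \<theta>) < conv_radius w" using radius by (meson order.strict_trans1)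
qed

lemma S_ge: assumes "\<theta> \<in> {0..\<theta>s}" shows "w 0 \<le> (\<Sum>x. w x * \<theta> ^ x)"
proof -
  have "(\<Sum>x\<in>{0}. w x * \<theta> ^ x) \<le> (\<Sum>x. w x * \<theta> ^ x)"
    by (rule sum_le_suminf[OF summ[OF assms]]) (use assms in \<open>auto intro!: mult_nonneg_nonneg simp: order.strict_implies_order w_pos\<close>)
  then show ?thesis by simp
qed

lemma S_pos: assumes "\<theta> \<in> {0..\<theta>s}" shows "0 < (\<Sum>x. w x * \<theta> ^ x)"
  using S_ge[OF assms] w_pos[of 0] by linarith

lemma fdens_nonneg: assumes "\<theta> \<in> {0..\<theta>s}" shows "0 \<le> fdens w x \<theta>"
  using S_pos[OF assms] w_pos[of x] assms by (auto simp: fdens_def gnorm_def intro!: mult_nonneg_nonneg less_imp_le)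

lemma fdens_sums: assumes "\<theta> \<in> {0..\<theta>s}" shows "(\<lambda>x. fdens w x \<theta>) sums 1"
proof -
  have "(\<lambda>x. gnorm w \<theta> * (w x * \<theta> ^ x)) sums (gnorm w \<theta> * (\<Sum>x. w x * \<theta> ^ x))"
    by (rule sums_mult) (rule summable_sums[OF summ[OF assms]])
  moreover have "gnorm w \<theta> * (\<Sum>x. w x * \<theta> ^ x) = 1"
    using S_pos[OF assms] by (simp add: gnorm_def)
  ultimately show ?thesis by (simp add: fdens_def mult.assoc)
qed

lemma sum_fdens_le: assumes "\<theta> \<in> {0..\<theta>s}" "finite F" shows "(\<Sum>x\<in>F. fdens w x \<theta>) \<le> 1"
proof -
  have "(\<Sum>x\<in>F. fdens w x \<theta>) \<le> (\<Sum>x. fdens w x \<theta>)"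
    by (rule sum_le_suminf) (use fdens_sums[OF assms(1)] fdens_nonneg[OF assms(1)] assms(2) in \<open>auto simp: sums_iff\<close>)
  then show ?thesis using fdens_sums[OF assms(1)] by (simp add: sums_iff)
qed

lemma fdens_le1: assumes "\<theta> \<in> {0..\<theta>s}" shows "fdens w x \<theta> \<le> 1"
  using sum_fdens_le[OF assms, of "{x}"] by simp

lemma tail_exists:
  "\<exists>A \<rho>. 1 \<le> A \<and> 0 < \<rho> \<and> \<rho> < 1 \<and>
     (\<forall>\<theta>\<in>{0..\<theta>s}. \<forall>K. 1 - (\<Sum>x\<le>K. fdens w x \<theta>) \<le> A * \<rho> ^ (K+1))"
proof -
  obtain \<theta>1 where t1: "ereal \<theta>s < ereal \<theta>1" "ereal \<theta>1 < conv_radius w"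
    using ereal_dense2[OF radius] by blast
  have t1': "\<theta>s < \<theta>1" using t1 by simp
  have s1: "summable (\<lambda>x. w x * \<theta>1 ^ x)"
    by (rule summable_in_conv_radius) (use t1 t1' \<theta>s_pos in auto)
  define S1 where "S1 = (\<Sum>x. w x * \<theta>1 ^ x)"
  have nn1: "\<And>x. 0 \<le> w x * \<theta>1 ^ x" using w_pos t1' \<theta>s_pos by (auto intro!: mult_nonneg_nonneg simp: order.strict_implies_order)
  have S1pos: "S1 > 0"
  proof -
    have "(\<Sum>x\<in>{0}. w x * \<theta>1 ^ x) \<le> S1" unfolding S1_def
      by (rule sum_le_suminf[OF s1]) (use nn1 in auto)
    then show ?thesis using w_pos[of 0] by simp
  qed
  define \<rho> where "\<rho> = \<theta>s / \<theta>1"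
  have \<rho>: "0 < \<rho>" "\<rho> < 1" using t1' \<theta>s_pos by (auto simp: \<rho>_def)
  define A where "A = max 1 (S1 / w 0)"
  have A: "A \<ge> 1" by (simp add: A_def)
  have main: "1 - (\<Sum>x\<le>K. fdens w x \<theta>) \<le> A * \<rho> ^ (K+1)" if th: "\<theta> \<in> {0..\<theta>s}" for \<theta> K
  proof -
    have sm: "summable (\<lambda>x. w x * \<theta> ^ x)" by (rule summ[OF th])
    have sf: "summable (\<lambda>x. fdens w x \<theta>)" using fdens_sums[OF th] by (simp add: sums_iff)
    have "1 = (\<Sum>x. fdens w x \<theta>)" using fdens_sums[OF th] by (simp add: sums_iff)
    also have "\<dots> = (\<Sum>n. fdens w (n + Suc K) \<theta>) + (\<Sum>i<Suc K. fdens w i \<theta>)"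
      by (rule suminf_split_initial_segment[OF sf])
    finally have eq: "1 - (\<Sum>x\<le>K. fdens w x \<theta>) = (\<Sum>n. fdens w (n + Suc K) \<theta>)"
      using lessThan_Suc_atMost by simp
    have g: "gnorm w \<theta> \<le> 1 / w 0" "0 \<le> gnorm w \<theta>"
      using S_ge[OF th] S_pos[OF th] w_pos[of 0] by (auto simp: gnorm_def intro: frac_le)
    have trm: "fdens w (n + Suc K) \<theta> \<le> (\<rho> ^ (K+1) / w 0) * (w (n + Suc K) * \<theta>1 ^ (n + Suc K))" for n
    proof -
      have "fdens w (n + Suc K) \<theta> = gnorm w \<theta> * (w (n + Suc K) * \<theta> ^ (n + Suc K))"
        by (simp add: fdens_def mult.assoc)
      also have "\<dots> \<le> (1 / w 0) * (w (n + Suc K) * \<theta>s ^ (n + Suc K))"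
        using th g w_pos by (intro mult_mono mult_left_mono power_mono) (auto intro!: mult_nonneg_nonneg simp: order.strict_implies_order)
      also have "\<theta>s ^ (n + Suc K) = \<rho> ^ (n + Suc K) * \<theta>1 ^ (n + Suc K)"
        using t1' \<theta>s_pos by (simp add: \<rho>_def power_divide)
      also have "\<rho> ^ (n + Suc K) \<le> \<rho> ^ (K+1)"
        using \<rho> by (intro power_decreasing) auto
      then have "(1 / w 0) * (w (n + Suc K) * (\<rho> ^ (n + Suc K) * \<theta>1 ^ (n + Suc K)))
          \<le> (1 / w 0) * (w (n + Suc K) * (\<rho> ^ (K+1) * \<theta>1 ^ (n + Suc K)))"
        using w_pos t1' \<theta>s_pos by (intro mult_left_mono mult_right_mono) (auto intro!: mult_nonneg_nonneg simp: order.strict_implies_order)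
      finally show ?thesis by (simp add: field_simps)
    qed
    have s1': "summable (\<lambda>n. w (n + Suc K) * \<theta>1 ^ (n + Suc K))"
      using s1 by (subst summable_iff_shift) simp
    have "(\<Sum>n. fdens w (n + Suc K) \<theta>) \<le> (\<Sum>n. (\<rho> ^ (K+1) / w 0) * (w (n + Suc K) * \<theta>1 ^ (n + Suc K)))"
    proof (rule suminf_le[OF trm])
      show "summable (\<lambda>n. fdens w (n + Suc K) \<theta>)" using sf by (subst summable_iff_shift) 
      show "summable (\<lambda>n. (\<rho> ^ (K+1) / w 0) * (w (n + Suc K) * \<theta>1 ^ (n + Suc K)))"
        using s1' by (rule summable_mult)
    qed
    also have "\<dots> = (\<rho> ^ (K+1) / w 0) * (\<Sum>n. w (n + Suc K) * \<theta>1 ^ (n + Suc K))"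
      by (rule suminf_mult[OF s1'])
    also have "(\<Sum>n. w (n + Suc K) * \<theta>1 ^ (n + Suc K)) \<le> S1"
    proof -
      have "S1 = (\<Sum>n. w (n + Suc K) * \<theta>1 ^ (n + Suc K)) + (\<Sum>i<Suc K. w i * \<theta>1 ^ i)"
        unfolding S1_def by (rule suminf_split_initial_segment[OF s1])
      moreover have "0 \<le> (\<Sum>i<Suc K. w i * \<theta>1 ^ i)" using nn1 by (intro sum_nonneg) auto
      ultimately show ?thesis by linarith
    qed
    then have "(\<rho> ^ (K+1) / w 0) * (\<Sum>n. w (n + Suc K) * \<theta>1 ^ (n + Suc K)) \<le> (\<rho> ^ (K+1) / w 0) * S1"
      using \<rho> w_pos[of 0] by (intro mult_left_mono) auto
    also have "(\<rho> ^ (K+1) / w 0) * S1 \<le> A * \<rho> ^ (K+1)"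
    proof -
      have "(\<rho> ^ (K+1) / w 0) * S1 = (S1 / w 0) * \<rho> ^ (K+1)" by simp
      also have "\<dots> \<le> A * \<rho> ^ (K+1)" unfolding A_def using \<rho> by (intro mult_right_mono) auto
      finally show ?thesis .
    qed
    finally show ?thesis using eq by simp
  qed
  show ?thesis using A \<rho> main by blast
qed

end


context model begin

lemma space_mix: assumes "Q \<in> mixing_measures \<theta>s" shows "space Q = {0..\<theta>s}"
proof -
  have "sets Q = sets (restrict_space borel {0..\<theta>s})" using assms by (simp add: mixing_measures_def)
  then have "space Q = space (restrict_space borel {0..\<theta>s})" by (rule sets_eq_imp_space_eq)
  then show ?thesis by simp
qed

lemma prob_mix: assumes "Q \<in> mixing_measures \<theta>s" shows "prob_space Q"
  using assms by (simp add: mixing_measures_def)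

lemma S_meas: "(\<lambda>\<theta>. \<Sum>x. w x * \<theta> ^ x) \<in> borel_measurable (restrict_space borel {0..\<theta>s})"
proof (rule borel_measurable_LIMSEQ_real[where u="\<lambda>i \<theta>. \<Sum>x<i. w x * \<theta> ^ x"])
  fix \<theta> assume "\<theta> \<in> space (restrict_space borel {0..\<theta>s})"
  then have "\<theta> \<in> {0..\<theta>s}" by simp
  then show "(\<lambda>i. \<Sum>x<i. w x * \<theta> ^ x) \<longlonglongrightarrow> (\<Sum>x. w x * \<theta> ^ x)"
    using summ summable_LIMSEQ by blast
next
  fix i show "(\<lambda>\<theta>. \<Sum>x<i. w x * \<theta> ^ x) \<in> borel_measurable (restrict_space borel {0..\<theta>s})"
    by (rule measurable_restrict_space1) measurable
qed

lemma fdens_meas: assumes "Q \<in> mixing_measures \<theta>s" shows "fdens w x \<in> borel_measurable Q"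
proof -
  have "sets Q = sets (restrict_space borel {0..\<theta>s})" using assms by (simp add: mixing_measures_def)
  moreover have "fdens w x \<in> borel_measurable (restrict_space borel {0..\<theta>s})"
  proof -
    have m: "(\<lambda>\<theta>. \<Sum>x. w x * \<theta> ^ x) \<in> borel_measurable (restrict_space borel {0..\<theta>s})" by (rule S_meas)
    have p: "(\<lambda>\<theta>::real. w x * \<theta> ^ x) \<in> borel_measurable (restrict_space borel {0..\<theta>s})"
      by (rule measurable_restrict_space1) measurable
    have "(\<lambda>\<theta>. (1 / (\<Sum>x. w x * \<theta> ^ x)) * (w x * \<theta> ^ x)) \<in> borel_measurable (restrict_space borel {0..\<theta>s})"
      using m p by measurable
    moreover have "fdens w x = (\<lambda>\<theta>. (1 / (\<Sum>x. w x * \<theta> ^ x)) * (w x * \<theta> ^ x))"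
      by (auto simp: fdens_def gnorm_def fun_eq_iff)
    ultimately show ?thesis by simp
  qed
  ultimately show ?thesis using measurable_cong_sets[of Q "restrict_space borel {0..\<theta>s}" borel borel] by simp
qed

lemma fdens_integrable: assumes "Q \<in> mixing_measures \<theta>s" shows "integrable Q (fdens w x)"
proof -
  interpret prob_space Q by (rule prob_mix[OF assms])
  show ?thesis
  proof (rule integrable_const_bound[where B=1])
    show "AE \<theta> in Q. norm (fdens w x \<theta>) \<le> 1"
      using fdens_nonneg fdens_le1 space_mix[OF assms] by (intro AE_I2) auto
  qed (rule fdens_meas[OF assms])
qed

lemma hmix_nonneg: assumes "Q \<in> mixing_measures \<theta>s" shows "0 \<le> hmix w Q x"
  unfolding hmix_def using fdens_nonneg space_mix[OF assms] by (intro integral_nonneg_AE AE_I2) auto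

lemma hmix_sum_eq: assumes "Q \<in> mixing_measures \<theta>s" "finite F"
  shows "(\<Sum>x\<in>F. hmix w Q x) = (\<integral>\<theta>. (\<Sum>x\<in>F. fdens w x \<theta>) \<partial>Q)"
  unfolding hmix_def using Bochner_Integration.integral_sum[where I=F and M=Q and f="\<lambda>x \<theta>. fdens w x \<theta>", OF fdens_integrable[OF assms(1)]] by simp

lemma hmix_sum_le: assumes "Q \<in> mixing_measures \<theta>s" "finite F"
  shows "(\<Sum>x\<in>F. hmix w Q x) \<le> 1"
proof -
  interpret prob_space Q by (rule prob_mix[OF assms(1)])
  have "(\<integral>\<theta>. (\<Sum>x\<in>F. fdens w x \<theta>) \<partial>Q) \<le> (\<integral>\<theta>. 1 \<partial>Q)"
    using sum_fdens_le space_mix[OF assms(1)] assms(2) fdens_integrable[OF assms(1)]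
    by (intro integral_mono_AE AE_I2) auto
  then show ?thesis using hmix_sum_eq[OF assms] prob_space by simp
qed

lemma hmix_le1: assumes "Q \<in> mixing_measures \<theta>s" shows "hmix w Q x \<le> 1"
  using hmix_sum_le[OF assms, of "{x}"] by simp

lemma hmix_tail:
  assumes "Q \<in> mixing_measures \<theta>s"
    and tl: "\<forall>\<theta>\<in>{0..\<theta>s}. \<forall>K. 1 - (\<Sum>x\<le>K. fdens w x \<theta>) \<le> A * \<rho> ^ (K+1)"
  shows "1 - (\<Sum>x\<le>K. hmix w Q x) \<le> A * \<rho> ^ (K+1)"
proof -
  interpret prob_space Q by (rule prob_mix[OF assms(1)])
  have "(\<integral>\<theta>. 1 - (\<Sum>x\<le>K. fdens w x \<theta>) \<partial>Q) \<le> (\<integral>\<theta>. A * \<rho> ^ (K+1) \<partial>Q)"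
    using tl space_mix[OF assms(1)] fdens_integrable[OF assms(1)]
    by (intro integral_mono_AE AE_I2) auto
  moreover have "(\<integral>\<theta>. 1 - (\<Sum>x\<le>K. fdens w x \<theta>) \<partial>Q) = 1 - (\<Sum>x\<le>K. hmix w Q x)"
    using hmix_sum_eq[OF assms(1), of "{..K}"] fdens_integrable[OF assms(1)] prob_space
    by (subst Bochner_Integration.integral_diff) auto
  ultimately show ?thesis using prob_space by simp
qed

lemma hmix_sums: assumes "Q \<in> mixing_measures \<theta>s" shows "hmix w Q sums 1"
proof -
  obtain A \<rho> where A: "1 \<le> A" "0 < \<rho>" "\<rho> < 1"
    and tl: "\<forall>\<theta>\<in>{0..\<theta>s}. \<forall>K. 1 - (\<Sum>x\<le>K. fdens w x \<theta>) \<le> A * \<rho> ^ (K+1)"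
    using tail_exists by blast
  have ub: "(\<Sum>x<K. hmix w Q x) \<le> 1" for K using hmix_sum_le[OF assms] by simp
  have lb: "1 - A * \<rho> ^ K \<le> (\<Sum>x<K. hmix w Q x)" for K
  proof (cases K)
    case 0 then show ?thesis using A by simp
  next
    case (Suc k)
    then show ?thesis using hmix_tail[OF assms tl, of k] lessThan_Suc_atMost by simp
  qed
  have l1: "(\<lambda>K. 1 - A * \<rho> ^ K) \<longlonglongrightarrow> 1"
    using A by (intro tendsto_eq_intros LIMSEQ_power_zero) auto
  have "(\<lambda>K. \<Sum>x<K. hmix w Q x) \<longlonglongrightarrow> 1"
    by (rule real_tendsto_sandwich[OF _ _ l1 tendsto_const]) (use lb ub in auto)
  then show ?thesis by (simp add: sums_def)
qed

lemma pmf_hmix: assumes "Q \<in> mixing_measures \<theta>s" shows "pmf (hmix_pmf w Q) x = hmix w Q x"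
proof -
  have nn: "\<And>x. 0 \<le> hmix w Q x" by (rule hmix_nonneg[OF assms])
  have "(\<integral>\<^sup>+x. ennreal (hmix w Q x) \<partial>count_space UNIV) = (\<Sum>x. ennreal (hmix w Q x))"
    by (rule nn_integral_count_space_nat)
  also have "\<dots> = ennreal (\<Sum>x. hmix w Q x)"
    using hmix_sums[OF assms] nn by (intro suminf_ennreal2) (auto simp: sums_iff)
  also have "\<dots> = 1" using hmix_sums[OF assms] by (simp add: sums_iff)
  finally have "(\<integral>\<^sup>+x. ennreal (hmix w Q x) \<partial>count_space UNIV) = 1" .
  then show ?thesis unfolding hmix_pmf_def using nn by (subst pmf_embed_pmf) auto
qed

end


lemma hobs_regroup:
  fixes X :: "nat \<Rightarrow> nat" and G :: "nat \<Rightarrow> real"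
  assumes "n \<ge> 1"
  shows "(\<Sum>i<n. G (X i)) = real n * (\<Sum>x\<in>X ` {..<n}. hobs n X x * G x)"
proof -
  have "(\<Sum>i<n. G (X i)) = (\<Sum>y\<in>X ` {..<n}. \<Sum>i\<in>{i. i \<in> {..<n} \<and> X i = y}. G (X i))"
    by (rule sum.image_gen) simp
  also have "\<dots> = (\<Sum>y\<in>X ` {..<n}. real (card {i. i < n \<and> X i = y}) * G y)"
    by (rule sum.cong) auto
  also have "\<dots> = real n * (\<Sum>x\<in>X ` {..<n}. hobs n X x * G x)"
    using assms by (simp add: hobs_def sum_distrib_left)
  finally show ?thesis .
qed

lemma hobs_sum1: assumes "n \<ge> 1" shows "(\<Sum>x\<in>X ` {..<n}. hobs n X x) = 1"
  using hobs_regroup[OF assms, of "\<lambda>_. 1" X] assms by simp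

lemma hobs_zero: "x \<notin> X ` {..<n} \<Longrightarrow> hobs n X x = 0"
  by (auto simp: hobs_def)

lemma hobs_pos: assumes "x \<in> X ` {..<n}" shows "hobs n X x > 0"
proof -
  obtain i where "i < n" "X i = x" using assms by auto
  then have "{i. i < n \<and> X i = x} \<noteq> {}" by auto
  then have "card {i. i < n \<and> X i = x} > 0" by (simp add: card_gt_0_iff)
  then show ?thesis using \<open>i < n\<close> by (simp add: hobs_def)
qed

lemma hobs_nonneg: "hobs n X x \<ge> 0" by (simp add: hobs_def)

lemma hobs_le1: "hobs n X x \<le> 1"
proof -
  have "card {i. i < n \<and> X i = x} \<le> card {..<n}" by (rule card_mono) auto
  then show ?thesis by (cases "n = 0") (auto simp: hobs_def)
qed

lemma T_le_D:
  fixes p h :: "nat \<Rightarrow> real" and S :: "nat set"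
  assumes fin: "finite S" and p1: "(\<Sum>x\<in>S. p x) = 1" and h1: "(\<Sum>x\<in>S. h x) \<le> 1"
    and ppos: "\<And>x. x \<in> S \<Longrightarrow> p x > 0" and hpos: "\<And>x. x \<in> S \<Longrightarrow> h x > 0"
  shows "(\<Sum>x\<in>S. max (p x - h x) 0) \<le> 2 * sqrt (\<Sum>x\<in>S. p x * ln (p x / h x))"
proof -
  define a where "a x = sqrt (p x)" for x
  define c where "c x = sqrt (h x)" for x
  have a2: "a x ^ 2 = p x" if "x \<in> S" for x using ppos[OF that] by (simp add: a_def)
  have c2: "c x ^ 2 = h x" if "x \<in> S" for x using hpos[OF that] by (simp add: c_def)
  have ac: "a x \<ge> 0" "c x \<ge> 0" if "x \<in> S" for x using ppos[OF that] hpos[OF that] by (auto simp: a_def c_def)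
  have t1: "max (p x - h x) 0 \<le> \<bar>a x - c x\<bar> * (a x + c x)" if "x \<in> S" for x
  proof -
    have "p x - h x = (a x - c x) * (a x + c x)" using a2[OF that] c2[OF that] by (simp add: power2_eq_square algebra_simps)
    then show ?thesis using ac[OF that] by (auto intro!: mult_right_mono)
  qed
  have T1: "(\<Sum>x\<in>S. max (p x - h x) 0) \<le> (\<Sum>x\<in>S. \<bar>a x - c x\<bar> * (a x + c x))"
    by (rule sum_mono) (rule t1)
  have CS: "(\<Sum>x\<in>S. \<bar>a x - c x\<bar> * (a x + c x))^2 \<le> (\<Sum>x\<in>S. \<bar>a x - c x\<bar>^2) * (\<Sum>x\<in>S. (a x + c x)^2)"
    by (rule Cauchy_Schwarz_ineq_sum)
  have P: "(\<Sum>x\<in>S. (a x + c x)^2) \<le> 4"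
  proof -
    have "(\<Sum>x\<in>S. (a x + c x)^2) \<le> (\<Sum>x\<in>S. 2 * (p x + h x))"
    proof (rule sum_mono)
      fix x assume x: "x \<in> S"
      have "(a x + c x)^2 \<le> 2 * (a x ^ 2 + c x ^ 2)" using zero_le_power2[of "a x - c x"] unfolding power2_eq_square by (simp add: algebra_simps)
      then show "(a x + c x)^2 \<le> 2 * (p x + h x)" using a2[OF x] c2[OF x] by simp
    qed
    also have "\<dots> = 2 * ((\<Sum>x\<in>S. p x) + (\<Sum>x\<in>S. h x))" by (simp add: sum.distrib sum_distrib_left)
    finally show ?thesis using p1 h1 by simp
  qed
  define D where "D = (\<Sum>x\<in>S. p x * ln (p x / h x))"
  have M: "(\<Sum>x\<in>S. \<bar>a x - c x\<bar>^2) \<le> D"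
  proof -
    have "(\<Sum>x\<in>S. \<bar>a x - c x\<bar>^2) = (\<Sum>x\<in>S. p x + h x - 2 * (a x * c x))"
          proof (rule sum.cong)
      fix x assume x: "x \<in> S"
      have "\<bar>a x - c x\<bar>^2 = a x ^ 2 + c x ^ 2 - 2 * (a x * c x)" by (simp add: power2_diff)
      then show "\<bar>a x - c x\<bar>^2 = p x + h x - 2 * (a x * c x)" using a2[OF x] c2[OF x] by simp
    qed simp
    also have "\<dots> = 1 + (\<Sum>x\<in>S. h x) - 2 * (\<Sum>x\<in>S. a x * c x)"
      by (simp only: sum_subtractf sum.distrib p1 sum_distrib_left[symmetric])
    also have "\<dots> \<le> 2 * (\<Sum>x\<in>S. p x * (1 - c x / a x))"
    proof -
      have "(\<Sum>x\<in>S. p x * (1 - c x / a x)) = 1 - (\<Sum>x\<in>S. a x * c x)"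
      proof -
        have "(\<Sum>x\<in>S. p x * (1 - c x / a x)) = (\<Sum>x\<in>S. p x - a x * c x)"
        proof (rule sum.cong)
          fix x assume x: "x \<in> S"
          have "a x > 0" using ppos[OF x] by (simp add: a_def)
          then show "p x * (1 - c x / a x) = p x - a x * c x"
            using a2[OF x] by (simp add: power2_eq_square field_simps)
        qed simp
        then show ?thesis using p1 by (simp add: sum_subtractf)
      qed
      then show ?thesis using h1 by simp
    qed
    also have "\<dots> \<le> D" unfolding D_def sum_distrib_left
    proof (rule sum_mono)
      fix x assume x: "x \<in> S"
      have apos: "a x > 0" and cpos: "c x > 0" using ppos[OF x] hpos[OF x] by (auto simp: a_def c_def)
      define u where "u = c x / a x"
      have u: "u > 0" using apos cpos by (simp add: u_def)
      have "ln u \<le> u - 1" using ln_le_minus_one[OF u] .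
      moreover have "ln (p x / h x) = - 2 * ln u"
      proof -
        have "p x / h x = (1/u)^2" using a2[OF x] c2[OF x] apos cpos by (simp add: u_def power_divide)
        moreover have "ln ((1/u)^2) = 2 * ln (1/u)" using u by (subst ln_realpow) auto
        moreover have "ln (1/u) = - ln u" using u by (simp add: ln_div)
        ultimately show ?thesis by simp
      qed
      ultimately show "2 * (p x * (1 - c x / a x)) \<le> p x * ln (p x / h x)"
      proof -
        have "1 - u \<le> - ln u" using \<open>ln u \<le> u - 1\<close> by linarith
        then have "p x * (1 - u) \<le> p x * (- ln u)" using ppos[OF x] by (intro mult_left_mono) auto
        moreover have "p x * ln (p x / h x) = 2 * (p x * (- ln u))" using \<open>ln (p x / h x) = - 2 * ln u\<close> by simp
        moreover have "c x / a x = u" by (simp add: u_def)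
        ultimately show ?thesis by (simp only:)
      qed
    qed
    finally show ?thesis .
  qed
  have M0: "0 \<le> (\<Sum>x\<in>S. \<bar>a x - c x\<bar>^2)" by (intro sum_nonneg) simp
  have P0: "0 \<le> (\<Sum>x\<in>S. (a x + c x)^2)" by (intro sum_nonneg) simp
  have Dnn: "D \<ge> 0" using M M0 by linarith
  define T where "T = (\<Sum>x\<in>S. \<bar>a x - c x\<bar> * (a x + c x))"
  have Tnn: "T \<ge> 0" unfolding T_def using ac by (intro sum_nonneg) (simp add: mult_nonneg_nonneg)
  have "(\<Sum>x\<in>S. \<bar>a x - c x\<bar>^2) * (\<Sum>x\<in>S. (a x + c x)^2) \<le> D * 4"
    by (rule mult_mono[OF M P Dnn P0])
  then have "T^2 \<le> D * 4" using CS unfolding T_def by linarith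
  then have "T \<le> sqrt (D * 4)" using Tnn by (simp add: real_le_rsqrt)
  also have "sqrt (D * 4) = 2 * sqrt D" by (simp add: real_sqrt_mult)
  finally show ?thesis using T1 unfolding T_def D_def by simp
qed


lemma partial_abs_le:
  fixes p h :: "nat \<Rightarrow> real" and S :: "nat set"
  assumes fin: "finite S" and p1: "(\<Sum>x\<in>S. p x) = 1" and p0: "\<And>x. x \<notin> S \<Longrightarrow> p x = 0"
    and hnn: "\<And>x. 0 \<le> h x" and hsum: "\<And>F. finite F \<Longrightarrow> (\<Sum>x\<in>F. h x) \<le> 1"
  shows "(\<Sum>x<N. \<bar>p x - h x\<bar>) \<le> 2 * (\<Sum>x\<in>S. max (p x - h x) 0)"
proof -
  have split: "(\<Sum>x<N. \<bar>p x - h x\<bar>) = (\<Sum>x\<in>{..<N} \<inter> S. \<bar>p x - h x\<bar>) + (\<Sum>x\<in>{..<N} - S. \<bar>p x - h x\<bar>)"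
    by (rule sum.Int_Diff) simp
  have a: "(\<Sum>x\<in>{..<N} \<inter> S. \<bar>p x - h x\<bar>) \<le> (\<Sum>x\<in>S. \<bar>p x - h x\<bar>)"
    by (rule sum_mono2) (use fin in auto)
  have b1: "(\<Sum>x\<in>{..<N} - S. \<bar>p x - h x\<bar>) = (\<Sum>x\<in>{..<N} - S. h x)"
    by (rule sum.cong) (auto simp: p0 hnn)
  have b2: "(\<Sum>x\<in>{..<N} - S. h x) + (\<Sum>x\<in>S. h x) = (\<Sum>x\<in>({..<N} - S) \<union> S. h x)"
    by (rule sum.union_disjoint[symmetric]) (use fin in auto)
  have b3: "(\<Sum>x\<in>({..<N} - S) \<union> S. h x) \<le> 1" by (rule hsum) (use fin in auto)
  have c: "(\<Sum>x\<in>S. \<bar>p x - h x\<bar>) + (1 - (\<Sum>x\<in>S. h x)) = 2 * (\<Sum>x\<in>S. max (p x - h x) 0)"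
  proof -
    have "(\<Sum>x\<in>S. \<bar>p x - h x\<bar>) + (1 - (\<Sum>x\<in>S. h x)) = (\<Sum>x\<in>S. \<bar>p x - h x\<bar> + (p x - h x))"
      using p1 by (simp add: sum.distrib sum_subtractf)
    also have "\<dots> = (\<Sum>x\<in>S. 2 * max (p x - h x) 0)" by (rule sum.cong) (auto simp: max_def)
    finally show ?thesis by (simp add: sum_distrib_left)
  qed
  show ?thesis using split a b1 b2 b3 c by linarith
qed

lemma dev_bound:
  fixes n :: nat and X :: "nat \<Rightarrow> nat" and b h q :: "nat \<Rightarrow> real"
  assumes n: "n \<ge> 1" and hnn: "\<And>x. 0 \<le> h x" and hsum: "\<And>F. finite F \<Longrightarrow> (\<Sum>x\<in>F. h x) \<le> 1"
    and hpos: "\<And>i. i < n \<Longrightarrow> h (X i) > 0" and qpos: "\<And>i. i < n \<Longrightarrow> q (X i) > 0"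
    and lik: "(\<Sum>i<n. ln (q (X i))) \<le> (\<Sum>i<n. ln (h (X i)))"
    and bnd: "\<And>x. \<bar>b x\<bar> \<le> B"
  shows "\<bar>\<Sum>x. b x * (hobs n X x - h x)\<bar> \<le> 4 * B * sqrt ((\<Sum>x\<in>X ` {..<n}. hobs n X x ^ 2 / q x) - 1)"
proof -
  define S where "S = X ` {..<n}"
  define p where "p = hobs n X"
  have fin: "finite S" by (simp add: S_def)
  have p1: "(\<Sum>x\<in>S. p x) = 1" using hobs_sum1[OF n] by (simp add: S_def p_def)
  have p0: "\<And>x. x \<notin> S \<Longrightarrow> p x = 0" by (simp add: S_def p_def hobs_zero)
  have ppos: "\<And>x. x \<in> S \<Longrightarrow> p x > 0" by (simp add: S_def p_def hobs_pos)
  have hposS: "\<And>x. x \<in> S \<Longrightarrow> h x > 0" using hpos by (auto simp: S_def)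
  have qposS: "\<And>x. x \<in> S \<Longrightarrow> q x > 0" using qpos by (auto simp: S_def)
  have B0: "B \<ge> 0" using bnd[of 0] by linarith
  define D where "D = (\<Sum>x\<in>S. p x * ln (p x / h x))"
  define chi where "chi = (\<Sum>x\<in>S. p x ^ 2 / q x) - 1"
  have lik': "(\<Sum>x\<in>S. p x * ln (q x)) \<le> (\<Sum>x\<in>S. p x * ln (h x))"
    using lik hobs_regroup[OF n, of "\<lambda>x. ln (q x)" X] hobs_regroup[OF n, of "\<lambda>x. ln (h x)" X] n
    by (simp add: S_def p_def)
  have DK: "D \<le> (\<Sum>x\<in>S. p x * ln (p x / q x))"
  proof -
    have "D = (\<Sum>x\<in>S. p x * ln (p x)) - (\<Sum>x\<in>S. p x * ln (h x))"
      unfolding D_def sum_subtractf[symmetric]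
    proof (rule sum.cong)
      fix x assume x: "x \<in> S"
      have "ln (p x / h x) = ln (p x) - ln (h x)" using ppos[OF x] hposS[OF x] by (simp add: ln_div)
      then show "p x * ln (p x / h x) = p x * ln (p x) - p x * ln (h x)" by (simp add: right_diff_distrib)
    qed simp
    moreover have "(\<Sum>x\<in>S. p x * ln (p x / q x)) = (\<Sum>x\<in>S. p x * ln (p x)) - (\<Sum>x\<in>S. p x * ln (q x))"
      unfolding sum_subtractf[symmetric]
    proof (rule sum.cong)
      fix x assume x: "x \<in> S"
      have "ln (p x / q x) = ln (p x) - ln (q x)" using ppos[OF x] qposS[OF x] by (simp add: ln_div)
      then show "p x * ln (p x / q x) = p x * ln (p x) - p x * ln (q x)" by (simp add: right_diff_distrib)
    qed simp
    ultimately show ?thesis using lik' by linarith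
  qed
  have Kchi: "(\<Sum>x\<in>S. p x * ln (p x / q x)) \<le> chi"
  proof -
    have "(\<Sum>x\<in>S. p x * ln (p x / q x)) \<le> (\<Sum>x\<in>S. p x * (p x / q x - 1))"
    proof (rule sum_mono)
      fix x assume x: "x \<in> S"
      have "ln (p x / q x) \<le> p x / q x - 1" using ppos[OF x] qposS[OF x] by (intro ln_le_minus_one) simp
      then show "p x * ln (p x / q x) \<le> p x * (p x / q x - 1)" using ppos[OF x] by (intro mult_left_mono) auto
    qed
    also have "\<dots> = chi" unfolding chi_def using p1
      by (simp add: right_diff_distrib sum_subtractf power2_eq_square)
    finally show ?thesis .
  qed
  define T where "T = (\<Sum>x\<in>S. max (p x - h x) 0)"
  have hS: "(\<Sum>x\<in>S. h x) \<le> 1" by (rule hsum[OF fin])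
  have TD: "T \<le> 2 * sqrt D" unfolding T_def D_def by (rule T_le_D[OF fin p1 hS ppos hposS])
  have "sqrt D \<le> sqrt chi" using DK Kchi by (intro real_sqrt_le_mono) linarith
  then have Tchi: "T \<le> 2 * sqrt chi" using TD by linarith
  have part: "(\<Sum>x<N. \<bar>b x * (p x - h x)\<bar>) \<le> B * (2 * T)" for N
  proof -
    have "(\<Sum>x<N. \<bar>b x * (p x - h x)\<bar>) \<le> (\<Sum>x<N. B * \<bar>p x - h x\<bar>)"
      by (rule sum_mono) (auto simp: abs_mult intro!: mult_right_mono bnd)
    also have "\<dots> = B * (\<Sum>x<N. \<bar>p x - h x\<bar>)" by (simp add: sum_distrib_left)
    also have "\<dots> \<le> B * (2 * T)" unfolding T_def
      by (rule mult_left_mono[OF partial_abs_le[OF fin p1 p0 hnn hsum] B0])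
    finally show ?thesis .
  qed
  have sm: "summable (\<lambda>x. \<bar>b x * (p x - h x)\<bar>)"
    by (rule summableI_nonneg_bounded[where x="B * (2 * T)"]) (use part in auto)
  have "\<bar>\<Sum>x. b x * (p x - h x)\<bar> \<le> (\<Sum>x. \<bar>b x * (p x - h x)\<bar>)" by (rule summable_rabs[OF sm])
  also have "\<dots> \<le> B * (2 * T)" by (rule suminf_le_const[OF sm part])
  also have "\<dots> \<le> B * (2 * (2 * sqrt chi))" using Tchi B0 by (intro mult_left_mono) auto
  finally show ?thesis by (simp add: chi_def S_def p_def)
qed



lemma pmf_int_bounded:
  fixes f :: "'a \<Rightarrow> real"
  assumes "\<And>X. \<bar>f X\<bar> \<le> c" shows "integrable (measure_pmf P) f"
  by (rule measure_pmf.integrable_const_bound[where B=c]) (auto simp: assms)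

lemma exp_ind_pmf: "measure_pmf.expectation p (\<lambda>v. if v = x then 1 else 0 :: real) = pmf p x"
proof -
  have "(\<lambda>v. if v = x then 1 else 0 :: real) = indicator {x}" by (auto simp: fun_eq_iff)
  then show ?thesis by (simp add: measure_pmf_single)
qed

lemma prod_ind:
  fixes p :: "nat pmf" and n :: nat
  assumes B: "B \<subseteq> {..<n}"
  shows "measure_pmf.expectation (Pi_pmf {..<n} d (\<lambda>_. p)) (\<lambda>X. \<Prod>k\<in>B. (if X k = x then 1 else 0 :: real))
     = pmf p x ^ card B"
proof -
  define f where "f k v = (if k \<in> B then (if v = x then 1 else 0) else 1 :: real)" for k v
  have eq: "(\<Prod>k\<in>B. (if X k = x then 1 else 0 :: real)) = (\<Prod>k\<in>{..<n}. f k (X k))" for X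
  proof -
    have "(\<Prod>k\<in>B. (if X k = x then 1 else 0 :: real)) = (\<Prod>k\<in>{..<n} \<inter> B. (if X k = x then 1 else 0 :: real))"
      using B by (simp only: Int_absorb1)
    also have "\<dots> = (\<Prod>k\<in>{..<n}. f k (X k))"
      by (subst prod.inter_restrict) (simp_all add: f_def)
    finally show ?thesis .
  qed
  have "measure_pmf.expectation (Pi_pmf {..<n} d (\<lambda>_. p)) (\<lambda>X. \<Prod>k\<in>{..<n}. f k (X k))
      = (\<Prod>k\<in>{..<n}. measure_pmf.expectation p (f k))"
    by (rule expectation_prod_Pi_pmf) (auto simp: f_def intro: pmf_int_bounded[where c=1])
  also have "\<dots> = (\<Prod>k\<in>{..<n}. if k \<in> B then pmf p x else 1)"
  proof (rule prod.cong)
    fix k assume "k \<in> {..<n}"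
    show "measure_pmf.expectation p (f k) = (if k \<in> B then pmf p x else 1)"
    proof (cases "k \<in> B")
      case True
      then have "f k = (\<lambda>v. if v = x then 1 else 0)" by (simp add: f_def fun_eq_iff)
      then show ?thesis using True exp_ind_pmf by simp
    next
      case False
      then have "f k = (\<lambda>v. 1)" by (simp add: f_def fun_eq_iff)
      then show ?thesis using False by simp
    qed
  qed simp
  also have "\<dots> = (\<Prod>k\<in>{..<n} \<inter> B. pmf p x)"
    by (subst prod.inter_restrict) simp_all
  also have "\<dots> = pmf p x ^ card B" using B by (simp only: Int_absorb1 prod_constant)
  finally show ?thesis using eq by simp
qed


lemma hobs_as_sum: "hobs n X x = (\<Sum>i<n. (if X i = x then 1 else 0 :: real)) / real n"
proof -
  have "(\<Sum>i<n. (if X i = x then 1 else 0 :: real)) = (\<Sum>i\<in>{..<n} \<inter> {i. X i = x}. 1)"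
    by (subst sum.inter_restrict) simp_all
  also have "\<dots> = real (card ({..<n} \<inter> {i. X i = x}))" by simp
  also have "{..<n} \<inter> {i. X i = x} = {i. i < n \<and> X i = x}" by auto
  finally show ?thesis by (simp add: hobs_def)
qed

lemma var_hobs:
  fixes p :: "nat pmf" and n :: nat
  assumes n: "n \<ge> 1"
  shows "measure_pmf.expectation (Pi_pmf {..<n} 0 (\<lambda>_. p)) (\<lambda>X. (hobs n X x - pmf p x)^2) \<le> pmf p x / real n"
proof -
  define P where "P = Pi_pmf {..<n} (0::nat) (\<lambda>_. p)"
  define q where "q = pmf p x"
  define Y where "Y i X = (if X i = x then 1 else 0 :: real)" for i and X :: "nat \<Rightarrow> nat"
  have Yeq: "Y i = (\<lambda>X. if X i = x then 1 else 0)" for i by (simp add: Y_def fun_eq_iff)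
  have q01: "0 \<le> q" "q \<le> 1" by (auto simp: q_def pmf_le_1)
  have Y01: "0 \<le> Y i X" "Y i X \<le> 1" for i X by (auto simp: Y_def)
  have bndY: "\<bar>Y i X - q\<bar> \<le> 1" for i X using Y01[of i X] q01 by linarith
  have EY: "measure_pmf.expectation P (Y i) = q" if "i < n" for i
    using prod_ind[where B="{i}" and n=n and p=p and d=0 and x=x] that by (simp add: P_def q_def Yeq)
  have EYY: "measure_pmf.expectation P (\<lambda>X. Y i X * Y j X) = (if i = j then q else q^2)"
    if "i < n" "j < n" for i j
  proof (cases "i = j")
    case True
    have "(\<lambda>X. Y i X * Y j X) = Y i" using True by (auto simp: Y_def fun_eq_iff)
    then show ?thesis using EY[OF that(1)] True by simp
  next
    case False
    have "measure_pmf.expectation P (\<lambda>X. \<Prod>k\<in>{i,j}. (if X k = x then 1 else 0 :: real)) = q ^ card {i,j}"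
      using prod_ind[where B="{i,j}" and n=n and p=p and d=0 and x=x] that by (simp add: P_def q_def)
    moreover have "(\<lambda>X. \<Prod>k\<in>{i,j}. (if X k = x then 1 else 0 :: real)) = (\<lambda>X. Y i X * Y j X)"
      using False by (simp add: Y_def fun_eq_iff)
    ultimately show ?thesis using False by (simp add: power2_eq_square)
  qed
  have intY: "integrable P (Y i)" for i by (rule pmf_int_bounded[where c=1]) (use Y01 in \<open>simp add: abs_le_iff\<close>)
  have intYY: "integrable P (\<lambda>X. Y i X * Y j X)" for i j
    by (rule pmf_int_bounded[where c=1]) (use Y01 in \<open>simp add: abs_mult mult_le_one\<close>)
  have C: "measure_pmf.expectation P (\<lambda>X. (Y i X - q) * (Y j X - q)) = (if i = j then q - q^2 else 0)"
    if "i < n" "j < n" for i j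
  proof -
    have e: "(\<lambda>X. (Y i X - q) * (Y j X - q)) = (\<lambda>X. (Y i X * Y j X - q * Y i X) - (q * Y j X - q^2))"
      by (simp add: fun_eq_iff algebra_simps power2_eq_square)
    have "measure_pmf.expectation P (\<lambda>X. (Y i X * Y j X - q * Y i X) - (q * Y j X - q^2))
       = (measure_pmf.expectation P (\<lambda>X. Y i X * Y j X) - q * measure_pmf.expectation P (Y i))
         - (q * measure_pmf.expectation P (Y j) - q^2)"
      using intY intYY by simp
    then show ?thesis unfolding e using EYY[OF that] EY[OF that(1)] EY[OF that(2)]
      by (simp add: power2_eq_square)
  qed
  have pt: "(hobs n X x - q)^2 = (1 / (real n)^2) * (\<Sum>i<n. \<Sum>j<n. (Y i X - q) * (Y j X - q))" for X
  proof -
    have "hobs n X x - q = (\<Sum>i<n. (Y i X - q)) / real n"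
      using n by (simp add: hobs_as_sum Y_def sum_subtractf field_simps)
    then have "(hobs n X x - q)^2 = (\<Sum>i<n. (Y i X - q))^2 / (real n)^2" by (simp add: power_divide)
    also have "(\<Sum>i<n. (Y i X - q))^2 = (\<Sum>i<n. \<Sum>j<n. (Y i X - q) * (Y j X - q))"
      by (simp add: power2_eq_square sum_product)
    finally show ?thesis by simp
  qed
  have intC: "integrable P (\<lambda>X. (Y i X - q) * (Y j X - q))" for i j
    by (rule pmf_int_bounded[where c=1]) (use bndY in \<open>simp add: abs_mult mult_le_one\<close>)
  have "measure_pmf.expectation P (\<lambda>X. (hobs n X x - q)^2)
      = (1 / (real n)^2) * (\<Sum>i<n. \<Sum>j<n. measure_pmf.expectation P (\<lambda>X. (Y i X - q) * (Y j X - q)))"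
    unfolding pt using intC by simp
  also have "\<dots> = (1 / (real n)^2) * (\<Sum>i<n. \<Sum>j<n. (if i = j then q - q^2 else 0))"
    using C by simp
  also have "\<dots> = (1 / (real n)^2) * (real n * (q - q^2))" by simp
  also have "\<dots> = (q - q^2) / real n" using n by (simp add: power2_eq_square)
  also have "\<dots> \<le> q / real n" using n by (intro divide_right_mono) auto
  finally show ?thesis by (simp add: P_def q_def)
qed



context model begin

lemma tail_prob:
  assumes Q: "Q \<in> mixing_measures \<theta>s"
  shows "measure_pmf.prob (hmix_pmf w Q) {y. y > K} = 1 - (\<Sum>x\<le>K. hmix w Q x)"
proof -
  let ?p = "hmix_pmf w Q"
  have "{y. y > K} = space (measure_pmf ?p) - {..K}" by auto
  moreover have "measure_pmf.prob ?p (space (measure_pmf ?p) - {..K}) = 1 - measure_pmf.prob ?p {..K}"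
    by (rule measure_pmf.prob_compl) simp
  ultimately have "measure_pmf.prob ?p {y. y > K} = 1 - measure_pmf.prob ?p {..K}" by simp
  also have "measure_pmf.prob ?p {..K} = (\<Sum>x\<le>K. pmf ?p x)" by (simp add: measure_measure_pmf_finite)
  also have "\<dots> = (\<Sum>x\<le>K. hmix w Q x)" by (simp add: pmf_hmix[OF Q])
  finally show ?thesis .
qed

lemma bad1:
  assumes Q: "Q \<in> mixing_measures \<theta>s"
  shows "measure_pmf.prob (Pi_pmf {..<n} 0 (\<lambda>_. hmix_pmf w Q)) {X. \<exists>i<n. X i > K}
      \<le> real n * (1 - (\<Sum>x\<le>K. hmix w Q x))"
proof -
  let ?P = "Pi_pmf {..<n} (0::nat) (\<lambda>_. hmix_pmf w Q)"
  have eq: "{X. \<exists>i<n. X i > K} = (\<Union>i\<in>{..<n}. {X. X i > K})" by auto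
  have "measure_pmf.prob ?P (\<Union>i\<in>{..<n}. {X. X i > K}) \<le> (\<Sum>i\<in>{..<n}. measure_pmf.prob ?P {X. X i > K})"
    by (rule measure_pmf.finite_measure_subadditive_finite) auto
  also have "\<dots> = (\<Sum>i\<in>{..<n}. 1 - (\<Sum>x\<le>K. hmix w Q x))"
  proof (rule sum.cong)
    fix i assume i: "i \<in> {..<n}"
    have "measure_pmf.prob ?P {X. X i > K} = measure_pmf.prob (map_pmf (\<lambda>X. X i) ?P) {y. y > K}"
      by (simp add: vimage_def)
    also have "map_pmf (\<lambda>X. X i) ?P = hmix_pmf w Q" using i by (simp add: Pi_pmf_component)
    finally show "measure_pmf.prob ?P {X. X i > K} = 1 - (\<Sum>x\<le>K. hmix w Q x)"
      using tail_prob[OF Q] by simp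
  qed simp
  finally show ?thesis using eq by simp
qed

lemma EW:
  assumes Q: "Q \<in> mixing_measures \<theta>s" and n: "n \<ge> 1"
  shows "measure_pmf.expectation (Pi_pmf {..<n} 0 (\<lambda>_. hmix_pmf w Q))
     (\<lambda>X. \<Sum>x\<le>K. (hobs n X x - hmix w Q x)^2 / hmix w Q x) \<le> real (K+1) / real n"
    and "integrable (measure_pmf (Pi_pmf {..<n} 0 (\<lambda>_. hmix_pmf w Q)))
     (\<lambda>X. \<Sum>x\<le>K. (hobs n X x - hmix w Q x)^2 / hmix w Q x)"
proof -
  let ?P = "Pi_pmf {..<n} (0::nat) (\<lambda>_. hmix_pmf w Q)"
  let ?q = "hmix w Q"
  have q01: "0 \<le> ?q x" "?q x \<le> 1" for x using hmix_nonneg[OF Q] hmix_le1[OF Q] by auto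
  have sq1: "(hobs n X x - ?q x)^2 \<le> 1" for X x
  proof -
    have "\<bar>hobs n X x - ?q x\<bar> \<le> 1" using hobs_nonneg[of n X x] hobs_le1[of n X x] q01[of x] by linarith
    then have "\<bar>hobs n X x - ?q x\<bar>^2 \<le> 1^2" by (intro power_mono) auto
    then show ?thesis by simp
  qed
  have int: "integrable ?P (\<lambda>X. (hobs n X x - ?q x)^2 / ?q x)" for x
  proof (rule pmf_int_bounded[where c="1 / ?q x"])
    fix X show "\<bar>(hobs n X x - ?q x)^2 / ?q x\<bar> \<le> 1 / ?q x"
      using sq1[of X x] q01[of x] by (simp add: divide_right_mono)
  qed
  show "integrable ?P (\<lambda>X. \<Sum>x\<le>K. (hobs n X x - ?q x)^2 / ?q x)"
    using int by simp
  have each: "measure_pmf.expectation ?P (\<lambda>X. (hobs n X x - ?q x)^2 / ?q x) \<le> 1 / real n" for x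
  proof (cases "?q x = 0")
    case True then show ?thesis by simp
  next
    case False
    then have qp: "?q x > 0" using q01[of x] by linarith
    have "measure_pmf.expectation ?P (\<lambda>X. (hobs n X x - ?q x)^2 / ?q x)
        = measure_pmf.expectation ?P (\<lambda>X. (hobs n X x - ?q x)^2) / ?q x" by simp
    also have "\<dots> \<le> (?q x / real n) / ?q x"
      using var_hobs[OF n, of "hmix_pmf w Q" x] qp by (intro divide_right_mono) (auto simp: pmf_hmix[OF Q])
    also have "\<dots> = 1 / real n" using qp by simp
    finally show ?thesis .
  qed
  have "measure_pmf.expectation ?P (\<lambda>X. \<Sum>x\<le>K. (hobs n X x - ?q x)^2 / ?q x)
     = (\<Sum>x\<le>K. measure_pmf.expectation ?P (\<lambda>X. (hobs n X x - ?q x)^2 / ?q x))"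
    using int by simp
  also have "\<dots> \<le> (\<Sum>x\<le>K. 1 / real n)" by (rule sum_mono) (rule each)
  also have "\<dots> = real (K+1) / real n" by simp
  finally show "measure_pmf.expectation ?P (\<lambda>X. \<Sum>x\<le>K. (hobs n X x - ?q x)^2 / ?q x) \<le> real (K+1) / real n" .
qed

end


lemma ln_le_powr: fixes y e :: real assumes "y > 0" "e > 0" shows "ln y \<le> y powr e / e"
proof -
  have "ln (y powr e) \<le> y powr e - 1" using assms by (intro ln_le_minus_one) (simp add: powr_gt_zero)
  then have "e * ln y \<le> y powr e" using assms by (simp add: ln_powr)
  then show ?thesis using assms by (simp add: field_simps)
qed

lemma arith_main:
  fixes \<epsilon> A \<rho> \<delta> :: real and n :: nat
  assumes e: "0 < \<epsilon>" "\<epsilon> < 1" and A: "1 \<le> A" and r: "0 < \<rho>" "\<rho> < 1" and n: "n \<ge> 1"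
    and d: "0 < \<delta>" "\<delta> < 1"
  defines "lam \<equiv> - ln \<rho>"
  defines "K \<equiv> nat \<lceil>ln (2 * A * real n / \<delta>) / lam\<rceil>"
  shows "A * \<rho> ^ (K+1) \<le> \<delta> / (2 * real n)"
    and "(2 * real (K+1) + 1) / (real n * \<delta>) \<le> (2 * (2 * A) powr \<epsilon> / (\<epsilon> * lam) + 5) * (1 / (real n powr (1 - \<epsilon>) * \<delta> powr (1 + \<epsilon>)))"
proof -
  have lam: "lam > 0" using r by (simp add: lam_def)
  define y where "y = 2 * A * real n / \<delta>"
  have y1: "y \<ge> 1"
  proof -
    have "2 * A * real n \<ge> 1" using A n by (smt (verit) mult_le_cancel_left1 of_nat_1 of_nat_mono)
    then have "2 * A * real n \<ge> \<delta>" using d by linarith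
    then show ?thesis using d by (simp add: y_def field_simps)
  qed
  define L where "L = ln y"
  have L0: "L \<ge> 0" using y1 by (simp add: L_def)
  have K_def': "K = nat \<lceil>L / lam\<rceil>" by (simp add: K_def L_def y_def)
  have KL: "real K \<ge> L / lam" unfolding K_def' by linarith
  have KL2: "real K \<le> L / lam + 1" unfolding K_def' using L0 lam by (simp add: of_nat_nat)
  have "\<rho> ^ K = exp (- lam * real K)"
  proof -
    have "exp (- lam * real K) = exp (real K * ln \<rho>)" by (simp add: lam_def)
    also have "\<dots> = exp (ln \<rho>) ^ K" by (rule exp_of_nat_mult)
    also have "\<dots> = \<rho> ^ K" using r by simp
    finally show ?thesis by simp
  qed
  also have "\<dots> \<le> exp (- L)"
  proof -
    have "lam * real K \<ge> L" using KL lam by (simp add: field_simps)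
    then show ?thesis by simp
  qed
  also have "exp (- L) = 1 / y" using y1 by (simp add: L_def exp_minus inverse_eq_divide)
  finally have rK: "\<rho> ^ K \<le> 1 / y" .
  have "A * \<rho> ^ (K+1) \<le> A * \<rho> ^ K"
    using A r by (intro mult_left_mono power_decreasing) auto
  also have "\<dots> \<le> A * (1 / y)" using A rK by (intro mult_left_mono) auto
  also have "\<dots> = \<delta> / (2 * real n)" using A d n by (simp add: y_def field_simps)
  finally show "A * \<rho> ^ (K+1) \<le> \<delta> / (2 * real n)" .
  define Z where "Z = (real n / \<delta>) powr \<epsilon>"
  have Z1: "Z \<ge> 1"
  proof -
    have "real n / \<delta> \<ge> 1" using n d by (simp add: field_simps)
    then show ?thesis unfolding Z_def using e by (simp add: ge_one_powr_ge_zero)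
  qed
  have yZ: "y powr \<epsilon> = (2 * A) powr \<epsilon> * Z"
    unfolding y_def Z_def using A d by (simp add: powr_mult[symmetric] mult.assoc)
  have Lb: "L \<le> (2 * A) powr \<epsilon> * Z / \<epsilon>"
    using ln_le_powr[of y \<epsilon>] y1 e yZ by (simp add: L_def)
  define c0 where "c0 = 2 * (2 * A) powr \<epsilon> / (\<epsilon> * lam) + 5"
  have "2 * real (K+1) + 1 \<le> 2 * (L / lam) + 5" using KL2 by simp
  also have "\<dots> \<le> 2 * ((2 * A) powr \<epsilon> * Z / \<epsilon>) / lam + 5"
  proof -
    have "L / lam \<le> ((2 * A) powr \<epsilon> * Z / \<epsilon>) / lam" using Lb lam by (intro divide_right_mono) auto
    then show ?thesis by linarith
  qed
  also have "\<dots> = (2 * (2 * A) powr \<epsilon> / (\<epsilon> * lam)) * Z + 5" by (simp add: field_simps)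
  also have "\<dots> \<le> c0 * Z"
  proof -
    have "0 \<le> 2 * (2 * A) powr \<epsilon> / (\<epsilon> * lam)" using e lam by simp
    then show ?thesis using Z1 by (simp add: c0_def distrib_right)
  qed
  finally have num: "2 * real (K+1) + 1 \<le> c0 * Z" .
  have ZR: "Z / (real n * \<delta>) = 1 / (real n powr (1 - \<epsilon>) * \<delta> powr (1 + \<epsilon>))"
  proof -
    have nn: "real n > 0" using n by simp
    have "Z = real n powr \<epsilon> / \<delta> powr \<epsilon>" unfolding Z_def using nn d by (simp add: powr_divide)
    moreover have "real n powr (1 - \<epsilon>) = real n / real n powr \<epsilon>" using nn by (simp add: powr_diff)
    moreover have "\<delta> powr (1 + \<epsilon>) = \<delta> * \<delta> powr \<epsilon>" using d by (simp add: powr_add)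
    ultimately have "Z * (real n powr (1 - \<epsilon>) * \<delta> powr (1 + \<epsilon>)) = real n * \<delta>"
      using nn d by (simp add: powr_gt_zero)
    moreover have "real n powr (1 - \<epsilon>) * \<delta> powr (1 + \<epsilon>) > 0" using nn d by simp
    ultimately show ?thesis using nn d by (simp add: field_simps)
  qed
  have "(2 * real (K+1) + 1) / (real n * \<delta>) \<le> c0 * Z / (real n * \<delta>)"
    using num n d by (intro divide_right_mono) auto
  also have "\<dots> = c0 * (Z / (real n * \<delta>))" by simp
  finally show "(2 * real (K+1) + 1) / (real n * \<delta>) \<le> (2 * (2 * A) powr \<epsilon> / (\<epsilon> * lam) + 5) * (1 / (real n powr (1 - \<epsilon>) * \<delta> powr (1 + \<epsilon>)))"
    using ZR by (simp add: c0_def)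
qed



context model begin

lemma main:
  shows "\<forall>\<epsilon>::real. 0 < \<epsilon> \<and> \<epsilon> < 1 \<longrightarrow>
    (\<exists>C>0. \<forall>(Q :: real measure) (\<delta>::real) (n::nat) (Qhat :: (nat \<Rightarrow> nat) \<Rightarrow> real measure).
       Q \<in> mixing_measures \<theta>s \<longrightarrow> 0 < \<delta> \<longrightarrow> \<delta> < 1 \<longrightarrow> n \<ge> 1 \<longrightarrow>
       (\<forall>X \<in> set_pmf (Pi_pmf {..<n} 0 (\<lambda>_. hmix_pmf w Q)). is_npmle w \<theta>s n X (Qhat X)) \<longrightarrow>
       measure_pmf.prob (Pi_pmf {..<n} 0 (\<lambda>_. hmix_pmf w Q))
         {X. \<forall>b :: nat \<Rightarrow> real. bounded (range b) \<longrightarrow>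
              \<bar>\<Sum>x. b x * (hobs n X x - hmix w (Qhat X) x)\<bar>
                \<le> C * (SUP x. \<bar>b x\<bar>) * sqrt (1 / (real n powr (1 - \<epsilon>) * \<delta> powr (1 + \<epsilon>)))}
         \<ge> 1 - \<delta>)"
proof (intro allI impI)
  fix \<epsilon> :: real assume "0 < \<epsilon> \<and> \<epsilon> < 1"
  then have e: "0 < \<epsilon>" "\<epsilon> < 1" by auto
  obtain A \<rho> where A: "1 \<le> A" and r: "0 < \<rho>" "\<rho> < 1"
    and tl: "\<forall>\<theta>\<in>{0..\<theta>s}. \<forall>K. 1 - (\<Sum>x\<le>K. fdens w x \<theta>) \<le> A * \<rho> ^ (K+1)"
    using tail_exists by blast
  define lam where "lam = - ln \<rho>"
  have lam: "lam > 0" using r by (simp add: lam_def)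
  define c0 where "c0 = 2 * (2 * A) powr \<epsilon> / (\<epsilon> * lam) + 5"
  have "0 \<le> 2 * (2 * A) powr \<epsilon> / (\<epsilon> * lam)" using e lam by simp
  then have c0: "c0 > 0" by (simp add: c0_def)
  define C where "C = 4 * sqrt c0"
  have C: "C > 0" using c0 by (simp add: C_def)
  show "\<exists>C>0. \<forall>(Q :: real measure) (\<delta>::real) (n::nat) (Qhat :: (nat \<Rightarrow> nat) \<Rightarrow> real measure).
       Q \<in> mixing_measures \<theta>s \<longrightarrow> 0 < \<delta> \<longrightarrow> \<delta> < 1 \<longrightarrow> n \<ge> 1 \<longrightarrow>
       (\<forall>X \<in> set_pmf (Pi_pmf {..<n} 0 (\<lambda>_. hmix_pmf w Q)). is_npmle w \<theta>s n X (Qhat X)) \<longrightarrow>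
       measure_pmf.prob (Pi_pmf {..<n} 0 (\<lambda>_. hmix_pmf w Q))
         {X. \<forall>b :: nat \<Rightarrow> real. bounded (range b) \<longrightarrow>
              \<bar>\<Sum>x. b x * (hobs n X x - hmix w (Qhat X) x)\<bar>
                \<le> C * (SUP x. \<bar>b x\<bar>) * sqrt (1 / (real n powr (1 - \<epsilon>) * \<delta> powr (1 + \<epsilon>)))}
         \<ge> 1 - \<delta>"
  proof (rule exI[of _ C], intro conjI allI impI)
    show "C > 0" by (rule C)
    fix Q :: "real measure" and \<delta> :: real and n :: nat and Qhat :: "(nat \<Rightarrow> nat) \<Rightarrow> real measure"
    assume Q: "Q \<in> mixing_measures \<theta>s" and d0: "0 < \<delta>" and d1: "\<delta> < 1" and n: "n \<ge> 1"
      and npm: "\<forall>X \<in> set_pmf (Pi_pmf {..<n} 0 (\<lambda>_. hmix_pmf w Q)). is_npmle w \<theta>s n X (Qhat X)"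
    define P where "P = Pi_pmf {..<n} (0::nat) (\<lambda>_. hmix_pmf w Q)"
    define q where "q = hmix w Q"
    define K where "K = nat \<lceil>ln (2 * A * real n / \<delta>) / lam\<rceil>"
    define s where "s = 2 * real (K+1) / (real n * \<delta>)"
    define W where "W X = (\<Sum>x\<le>K. (hobs n X x - q x)^2 / q x)" for X
    define R where "R = 1 / (real n powr (1 - \<epsilon>) * \<delta> powr (1 + \<epsilon>))"
    have nr: "real n > 0" using n by simp
    have s0: "s > 0" using nr d0 by (simp add: s_def)
    have ar1: "A * \<rho> ^ (K+1) \<le> \<delta> / (2 * real n)"
      using arith_main(1)[OF e A r n d0 d1] by (simp add: K_def lam_def)
    have ar2: "(2 * real (K+1) + 1) / (real n * \<delta>) \<le> c0 * R"
      using arith_main(2)[OF e A r n d0 d1] by (simp add: K_def lam_def c0_def R_def)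
    have tailK: "1 - (\<Sum>x\<le>K. q x) \<le> \<delta> / (2 * real n)"
      using hmix_tail[OF Q tl, of K] ar1 by (simp add: q_def)
    have b1: "measure_pmf.prob P {X. \<exists>i<n. X i > K} \<le> \<delta> / 2"
    proof -
      have "measure_pmf.prob P {X. \<exists>i<n. X i > K} \<le> real n * (1 - (\<Sum>x\<le>K. q x))"
        using bad1[OF Q, of n K] by (simp add: P_def q_def)
      also have "\<dots> \<le> real n * (\<delta> / (2 * real n))" using tailK nr by (intro mult_left_mono) auto
      also have "\<dots> = \<delta> / 2" using nr by simp
      finally show ?thesis .
    qed
    have Weq: "W = (\<lambda>X. \<Sum>x\<le>K. (hobs n X x - hmix w Q x)^2 / hmix w Q x)"
      by (simp add: W_def q_def fun_eq_iff)
    have EW1: "measure_pmf.expectation P W \<le> real (K+1) / real n"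
      using EW(1)[OF Q n, of K] unfolding Weq P_def .
    have EW2: "integrable (measure_pmf P) W"
      using EW(2)[OF Q n, of K] unfolding Weq P_def .
    have Wnn: "W X \<ge> 0" for X unfolding W_def using hmix_nonneg[OF Q] by (intro sum_nonneg) (simp add: q_def)
    have b2: "measure_pmf.prob P {X. W X \<ge> s} \<le> \<delta> / 2"
    proof -
      have "measure_pmf.prob P {X \<in> space (measure_pmf P). W X \<ge> s} \<le> measure_pmf.expectation P W / s"
        by (rule integral_Markov_inequality_measure[where A=UNIV]) (use EW2 Wnn s0 in auto)
      also have "\<dots> \<le> (real (K+1) / real n) / s" using EW1 s0 by (intro divide_right_mono) auto
      also have "\<dots> = \<delta> / 2"
      proof -
        have k1: "real (K+1) > 0" by simp
        have "(real (K+1) / real n) / s = (real (K+1) / real n) * (real n * \<delta> / (2 * real (K+1)))"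
          by (simp add: s_def)
        also have "\<dots> = \<delta> / 2"
        proof -
          have gen: "(a / m) * (m * \<delta> / (2 * a)) = \<delta> / 2" if "a > 0" "m > 0" for a m :: real
            using that by (simp add: field_simps)
          show ?thesis by (rule gen[OF k1 nr])
        qed
        finally show ?thesis .
      qed
      finally show ?thesis by simp
    qed
    define G where "G = {X. (\<forall>i<n. X i \<le> K) \<and> W X < s}"
    have pG: "measure_pmf.prob P G \<ge> 1 - \<delta>"
    proof -
      have "UNIV - G \<subseteq> {X. \<exists>i<n. X i > K} \<union> {X. W X \<ge> s}" by (auto simp: G_def not_le)
      then have "measure_pmf.prob P (UNIV - G) \<le> measure_pmf.prob P ({X. \<exists>i<n. X i > K} \<union> {X. W X \<ge> s})"
        by (intro measure_pmf.finite_measure_mono) auto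
      also have "\<dots> \<le> measure_pmf.prob P {X. \<exists>i<n. X i > K} + measure_pmf.prob P {X. W X \<ge> s}"
        by (rule measure_subadditive) auto
      finally have "measure_pmf.prob P (UNIV - G) \<le> \<delta>" using b1 b2 by linarith
      moreover have "measure_pmf.prob P (space (measure_pmf P) - G) = 1 - measure_pmf.prob P G"
        by (rule measure_pmf.prob_compl) simp
      ultimately show ?thesis by simp
    qed
    define T where "T = {X. \<forall>b :: nat \<Rightarrow> real. bounded (range b) \<longrightarrow>
              \<bar>\<Sum>x. b x * (hobs n X x - hmix w (Qhat X) x)\<bar>
                \<le> C * (SUP x. \<bar>b x\<bar>) * sqrt (1 / (real n powr (1 - \<epsilon>) * \<delta> powr (1 + \<epsilon>)))}"
    have sub: "G \<inter> set_pmf P \<subseteq> T"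
    proof
      fix X assume X: "X \<in> G \<inter> set_pmf P"
      have XG: "\<forall>i<n. X i \<le> K" "W X < s" using X by (auto simp: G_def)
      have XP: "X \<in> set_pmf P" using X by simp
      have np: "is_npmle w \<theta>s n X (Qhat X)" using npm XP by (simp add: P_def)
      have Qh: "Qhat X \<in> mixing_measures \<theta>s" and hpos: "\<And>i. i < n \<Longrightarrow> hmix w (Qhat X) (X i) > 0"
        using np by (auto simp: is_npmle_def)
      have qpos: "q (X i) > 0" if "i < n" for i
      proof -
        have "X \<in> PiE_dflt {..<n} 0 (set_pmf \<circ> (\<lambda>_. hmix_pmf w Q))"
          using XP set_Pi_pmf[of "{..<n}" 0 "\<lambda>_. hmix_pmf w Q"] by (simp add: P_def)
        then have "X i \<in> set_pmf (hmix_pmf w Q)" using that by (simp add: PiE_dflt_def)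
        then have "pmf (hmix_pmf w Q) (X i) \<noteq> 0" by (simp add: set_pmf_iff)
        then show ?thesis using pmf_hmix[OF Q] hmix_nonneg[OF Q, of "X i"] by (simp add: q_def less_le)
      qed
      have lik: "(\<Sum>i<n. ln (q (X i))) \<le> (\<Sum>i<n. ln (hmix w (Qhat X) (X i)))"
        using np Q qpos by (auto simp: is_npmle_def q_def)
      define S where "S = X ` {..<n}"
      have SK: "S \<subseteq> {..K}" using XG(1) by (auto simp: S_def)
      have qposS: "q x > 0" if "x \<in> S" for x using qpos that by (auto simp: S_def)
      have hz: "hobs n X x = 0" if "x \<notin> S" for x using that hobs_zero by (simp add: S_def)
      define chi where "chi = (\<Sum>x\<in>S. hobs n X x ^ 2 / q x) - 1"
      have chi_eq: "chi = W X + (1 - (\<Sum>x\<le>K. q x))"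
      proof -
        have e1: "(\<Sum>x\<in>S. hobs n X x ^ 2 / q x) = (\<Sum>x\<le>K. hobs n X x ^ 2 / q x)"
          by (rule sum.mono_neutral_left) (use SK hz in auto)
        have e2: "(\<Sum>x\<le>K. hobs n X x) = 1"
        proof -
          have "(\<Sum>x\<in>S. hobs n X x) = (\<Sum>x\<le>K. hobs n X x)"
            by (rule sum.mono_neutral_left) (use SK hz in auto)
          then show ?thesis using hobs_sum1[OF n, of X] by (simp add: S_def)
        qed
        have e3: "W X = (\<Sum>x\<le>K. hobs n X x ^ 2 / q x) - 2 * (\<Sum>x\<le>K. hobs n X x) + (\<Sum>x\<le>K. q x)"
        proof -
          have "W X = (\<Sum>x\<le>K. hobs n X x ^ 2 / q x - 2 * hobs n X x + q x)"
            unfolding W_def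
          proof (rule sum.cong)
            fix x assume "x \<in> {..K}"
            show "(hobs n X x - q x)^2 / q x = hobs n X x ^ 2 / q x - 2 * hobs n X x + q x"
            proof (cases "x \<in> S")
              case True
              then have "q x > 0" by (rule qposS)
              then show ?thesis by (simp add: power2_diff field_simps power2_eq_square)
            next
              case False
              then have "q x = 0 \<or> q x > 0" using hmix_nonneg[OF Q, of x] by (auto simp: q_def)
              then show ?thesis
              proof
                assume "q x = 0" then show ?thesis using hz[OF False] by simp
              next
                assume "q x > 0" then show ?thesis by (simp add: power2_diff field_simps power2_eq_square)
              qed
            qed
          qed simp
          also have "\<dots> = (\<Sum>x\<le>K. hobs n X x ^ 2 / q x) - 2 * (\<Sum>x\<le>K. hobs n X x) + (\<Sum>x\<le>K. q x)"
            by (simp add: sum.distrib sum_subtractf sum_distrib_left)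
          finally show ?thesis .
        qed
        show ?thesis using e1 e2 e3 by (simp add: chi_def)
      qed
      have chi_le: "chi \<le> c0 * R"
      proof -
        have c1: "chi < s + \<delta> / (2 * real n)" using chi_eq XG(2) tailK by linarith
        have c2: "\<delta> / (2 * real n) \<le> 1 / (real n * \<delta>)"
        proof -
          have "\<delta> * \<delta> \<le> 2" using d0 d1 by (smt (verit) mult_le_one)
          then show ?thesis using nr d0 by (simp add: field_simps)
        qed
        have c3: "s + 1 / (real n * \<delta>) = (2 * real (K+1) + 1) / (real n * \<delta>)"
          by (simp only: s_def add_divide_distrib)
        show ?thesis using c1 c2 c3 ar2 by linarith
      qed
      show "X \<in> T" unfolding T_def
      proof (intro CollectI allI impI)
        fix b :: "nat \<Rightarrow> real" assume bb: "bounded (range b)"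
        define B where "B = (SUP x. \<bar>b x\<bar>)"
        have bdd: "bdd_above (range (\<lambda>x. \<bar>b x\<bar>))"
        proof -
          obtain a where "\<forall>y\<in>range b. norm y \<le> a" using bb by (auto simp: bounded_iff)
          then show ?thesis by (auto intro!: bdd_aboveI[where M=a])
        qed
        have bnd: "\<bar>b x\<bar> \<le> B" for x unfolding B_def by (rule cSUP_upper[OF _ bdd]) simp
        have B0: "B \<ge> 0" using bnd[of 0] by linarith
        have "\<bar>\<Sum>x. b x * (hobs n X x - hmix w (Qhat X) x)\<bar> \<le> 4 * B * sqrt chi"
          unfolding chi_def S_def
          by (rule dev_bound[OF n hmix_nonneg[OF Qh] hmix_sum_le[OF Qh] hpos qpos lik bnd])
        also have "\<dots> \<le> 4 * B * sqrt (c0 * R)"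
          using chi_le B0 by (intro mult_left_mono real_sqrt_le_mono) auto
        also have "\<dots> = C * B * sqrt R" by (simp add: C_def real_sqrt_mult)
        finally show "\<bar>\<Sum>x. b x * (hobs n X x - hmix w (Qhat X) x)\<bar>
                \<le> C * (SUP x. \<bar>b x\<bar>) * sqrt (1 / (real n powr (1 - \<epsilon>) * \<delta> powr (1 + \<epsilon>)))"
          by (simp add: B_def R_def)
      qed
    qed
    have "measure_pmf.prob P G = measure_pmf.prob P (G \<inter> set_pmf P)" by (simp add: measure_Int_set_pmf)
    also have "\<dots> \<le> measure_pmf.prob P T" by (rule measure_pmf.finite_measure_mono[OF sub]) simp
    finally show "measure_pmf.prob (Pi_pmf {..<n} 0 (\<lambda>_. hmix_pmf w Q))
         {X. \<forall>b :: nat \<Rightarrow> real. bounded (range b) \<longrightarrow>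
              \<bar>\<Sum>x. b x * (hobs n X x - hmix w (Qhat X) x)\<bar>
                \<le> C * (SUP x. \<bar>b x\<bar>) * sqrt (1 / (real n powr (1 - \<epsilon>) * \<delta> powr (1 + \<epsilon>)))}
         \<ge> 1 - \<delta>" using pG by (simp add: P_def T_def)
  qed
qed

end

theorem lemma5p3:
  fixes w :: "nat \<Rightarrow> real" and \<theta>s :: real
  assumes \<theta>s_pos: "\<theta>s > 0"
    and w_pos: "\<And>x. w x > 0"
    and radius: "ereal \<theta>s < conv_radius w"
  shows "\<forall>\<epsilon>::real. 0 < \<epsilon> \<and> \<epsilon> < 1 \<longrightarrow>
    (\<exists>C>0. \<forall>(Q :: real measure) (\<delta>::real) (n::nat) (Qhat :: (nat \<Rightarrow> nat) \<Rightarrow> real measure).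
       Q \<in> mixing_measures \<theta>s \<longrightarrow> 0 < \<delta> \<longrightarrow> \<delta> < 1 \<longrightarrow> n \<ge> 1 \<longrightarrow>
       (\<forall>X \<in> set_pmf (Pi_pmf {..<n} 0 (\<lambda>_. hmix_pmf w Q)). is_npmle w \<theta>s n X (Qhat X)) \<longrightarrow>
       measure_pmf.prob (Pi_pmf {..<n} 0 (\<lambda>_. hmix_pmf w Q))
         {X. \<forall>b :: nat \<Rightarrow> real. bounded (range b) \<longrightarrow>
              \<bar>\<Sum>x. b x * (hobs n X x - hmix w (Qhat X) x)\<bar>
                \<le> C * (SUP x. \<bar>b x\<bar>) * sqrt (1 / (real n powr (1 - \<epsilon>) * \<delta> powr (1 + \<epsilon>)))}
         \<ge> 1 - \<delta>)"
  using model.main[of w \<theta>s] model.intro assms by blast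

end
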